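(* Let $\mathcal X$ be finite with $N=|\mathcal X|\ge2$, let $c\in(0,1/N]$ and $0\le\varepsilon<\log\frac{2}{Nc}$. Then $$\sup_{K\in\mathcal M_1(\varepsilon,c)}\eta_{\mathrm{TV}}(K)=\frac{e^\varepsilon-1}{e^\varepsilon(1-Nc)+1},$$ moreover $\sup_{K\in\mathcal M_2(\varepsilon,c)}\eta_{\mathrm{TV}}(K)\le\sup_{K\in\mathcal M_1(\varepsilon,c)}\eta_{\mathrm{TV}}(K)$ (whenever $\mathcal M_2(\varepsilon,c)\neq\emptyset$), and $\mathcal M_0(\varepsilon,c)=\emptyset$.
   Context: A kernel $K$ is a row-stochastic matrix with entries $K_{Y|X=x}(y)$, $(K\circ P_X)(y)=\sum_xK_{Y|X=x}(y)P_X(x)$. PML: $\ell_{K\times P_X}(X\to y)=\log\frac{\max_x K_{Y|X=x}(y)}{(K\circ P_X)(y)}$ for full-support $P_X$ and $(K\circ P_X)(y)>0$. $\mathcal Q_{\mathcal X}(c)=\{P_X:\min_xP_X(x)\ge c\}$; $C(K,\mathcal P)=\sup_{P_X\in\mathcal P}\sup_{y:(K\circ P_X)(y)>0}\ell_{K\times P_X}(X\to y)$; $\mathcal M(\varepsilon,c)$ is the set of kernels with $C(K,\mathcal Q_{\mathcal X}(c))\le\varepsilon$. $\mathcal S_{N,2}$ denotes the $N\times 2$ row-stochastic matrices (kernels to a binary output set $\mathcal Y$). $\mathcal T_0=\{K\in\mathcal S_{N,2}:\forall y\in\mathcal Y\ \exists x\in\mathcal X,\ K_{Y|X=x}(y)=0\}$,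 $\mathcal T_1=\{K\in\mathcal S_{N,2}: K_{Y|X=x}(y)>0\ \forall x,y\}$. Define $\mathcal M_0(\varepsilon,c)=\mathcal M(\varepsilon,c)\cap\mathcal T_0$, $\mathcal M_1(\varepsilon,c)=\mathcal M(\varepsilon,c)\cap\mathcal T_1$, $\mathcal M_2(\varepsilon,c)=(\mathcal M(\varepsilon,c)\cap\mathcal S_{N,2})\setminus(\mathcal M_0(\varepsilon,c)\cup\mathcal M_1(\varepsilon,c))$. $\eta_{\mathrm{TV}}(K)=\max_{x\ne x'}\mathrm{TV}(K_{Y|X=x}\|K_{Y|X=x'})$. *)

theory Defs
  imports "HOL-Analysis.Analysis"
begin

text \<open>Kernels from a finite input type 'x to an output type 'y, as functions
  K x y = K_{Y|X=x}(y). Binary output sets are modelled by the type bool.\<close>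

definition stochastic :: "('x::finite \<Rightarrow> 'y::finite \<Rightarrow> real) \<Rightarrow> bool" where
  "stochastic K \<longleftrightarrow> (\<forall>x y. 0 \<le> K x y) \<and> (\<forall>x. (\<Sum>y\<in>UNIV. K x y) = 1)"

definition push :: "('x::finite \<Rightarrow> 'y \<Rightarrow> real) \<Rightarrow> ('x \<Rightarrow> real) \<Rightarrow> 'y \<Rightarrow> real" where
  "push K P y = (\<Sum>x\<in>UNIV. K x y * P x)"

definition pml :: "('x::finite \<Rightarrow> 'y \<Rightarrow> real) \<Rightarrow> ('x \<Rightarrow> real) \<Rightarrow> 'y \<Rightarrow> real" where
  "pml K P y = ln (Max (range (\<lambda>x. K x y)) / push K P y)"

definition pmfs :: "('x::finite \<Rightarrow> real) set" where
  "pmfs = {P. (\<forall>x. 0 \<le> P x) \<and> (\<Sum>x\<in>UNIV. P x) = 1}"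

definition Qset :: "real \<Rightarrow> ('x::finite \<Rightarrow> real) set" where
  "Qset c = {P \<in> pmfs. Min (range P) \<ge> c}"

definition Ccap :: "('x::finite \<Rightarrow> 'y \<Rightarrow> real) \<Rightarrow> ('x \<Rightarrow> real) set \<Rightarrow> ereal" where
  "Ccap K Ps = (SUP P\<in>Ps. SUP y\<in>{y. push K P y > 0}. ereal (pml K P y))"

definition Mset :: "real \<Rightarrow> real \<Rightarrow> ('x::finite \<Rightarrow> 'y::finite \<Rightarrow> real) set" where
  "Mset \<epsilon> c = {K. stochastic K \<and> Ccap K (Qset c) \<le> ereal \<epsilon>}"

definition S2 :: "('x::finite \<Rightarrow> bool \<Rightarrow> real) set" where
  "S2 = {K. stochastic K}"

definition T0 :: "('x::finite \<Rightarrow> bool \<Rightarrow> real) set" where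
  "T0 = {K \<in> S2. \<forall>y. \<exists>x. K x y = 0}"

definition T1 :: "('x::finite \<Rightarrow> bool \<Rightarrow> real) set" where
  "T1 = {K \<in> S2. \<forall>x y. K x y > 0}"

definition M0 :: "real \<Rightarrow> real \<Rightarrow> ('x::finite \<Rightarrow> bool \<Rightarrow> real) set" where
  "M0 \<epsilon> c = Mset \<epsilon> c \<inter> T0"

definition M1 :: "real \<Rightarrow> real \<Rightarrow> ('x::finite \<Rightarrow> bool \<Rightarrow> real) set" where
  "M1 \<epsilon> c = Mset \<epsilon> c \<inter> T1"

definition M2 :: "real \<Rightarrow> real \<Rightarrow> ('x::finite \<Rightarrow> bool \<Rightarrow> real) set" where
  "M2 \<epsilon> c = (Mset \<epsilon> c \<inter> S2) - (M0 \<epsilon> c \<union> M1 \<epsilon> c)"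

definition TV :: "('y::finite \<Rightarrow> real) \<Rightarrow> ('y \<Rightarrow> real) \<Rightarrow> real" where
  "TV p q = (1/2) * (\<Sum>y\<in>UNIV. \<bar>p y - q y\<bar>)"

definition eta_TV :: "('x::finite \<Rightarrow> 'y::finite \<Rightarrow> real) \<Rightarrow> real" where
  "eta_TV K = Max {TV (K x) (K x') | x x'. x \<noteq> x'}"

end

theory Submission imports Defs begin

lemma sum_bool: "(\<Sum>y\<in>UNIV. f y) = f True + (f False :: real)"
  by (simp add: UNIV_bool)

lemma stoch_bool:
  fixes K :: "'x::finite \<Rightarrow> bool \<Rightarrow> real"
  assumes "stochastic K"
  shows "K x False = 1 - K x True" "0 \<le> K x y" "K x y \<le> 1"
proof -
  have s: "K x True + K x False = 1" "0 \<le> K x True" "0 \<le> K x False"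
    using assms unfolding stochastic_def by (auto simp: sum_bool)
  show "K x False = 1 - K x True" using s by simp
  show "0 \<le> K x y" using assms unfolding stochastic_def by auto
  show "K x y \<le> 1" using s by (cases y) auto
qed

lemma Qset_iff: "P \<in> Qset c \<longleftrightarrow> (\<forall>x. 0 \<le> P x) \<and> (\<Sum>x\<in>UNIV. P x) = 1 \<and> (\<forall>x. c \<le> P x)"
  unfolding Qset_def pmfs_def by auto

lemma Ccap_point:
  fixes K :: "'x::finite \<Rightarrow> 'y::finite \<Rightarrow> real"
  assumes C: "Ccap K (Qset c) \<le> ereal \<epsilon>" and P: "P \<in> Qset c" and c: "0 < c"
    and K: "\<forall>x y. 0 \<le> K x y"
  shows "K x y \<le> exp \<epsilon> * push K P y"
proof -
  have Pc: "\<forall>x. c \<le> P x" using P by (simp add: Qset_iff)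
  have pnn: "0 \<le> push K P y" unfolding push_def
    using K Pc c by (intro sum_nonneg) (meson less_le_trans less_imp_le mult_nonneg_nonneg)
  show ?thesis
  proof (cases "push K P y > 0")
    case True
    have "ereal (pml K P y) \<le> Ccap K (Qset c)"
      unfolding Ccap_def
      by (rule SUP_upper2[OF P], rule SUP_upper) (use True in auto)
    from this C have "ereal (pml K P y) \<le> ereal \<epsilon>" by (rule order_trans)
    hence le: "pml K P y \<le> \<epsilon>" by simp
    let ?M = "Max (range (\<lambda>x. K x y))"
    have xm: "K x y \<le> ?M" by (rule Max_ge) auto
    show ?thesis
    proof (cases "?M > 0")
      case True
      have "?M / push K P y = exp (ln (?M / push K P y))"
        using True \<open>push K P y > 0\<close> by simp
      also have "\<dots> \<le> exp \<epsilon>" using le unfolding pml_def by simp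
      finally have "?M \<le> exp \<epsilon> * push K P y"
        using \<open>push K P y > 0\<close> by (simp add: divide_le_eq mult.commute)
      with xm show ?thesis by linarith
    next
      case False
      with xm have "K x y \<le> 0" by linarith
      moreover have "0 \<le> exp \<epsilon> * push K P y" using pnn by simp
      ultimately show ?thesis by linarith
    qed
  next
    case False
    hence "push K P y = 0" using pnn by simp
    hence "\<forall>z\<in>UNIV. K z y * P z = 0" unfolding push_def
      using K Pc c by (subst (asm) sum_nonneg_eq_0_iff) (auto, meson less_le_trans less_imp_le mult_nonneg_nonneg)
    hence "K x y * P x = 0" by simp
    moreover have "P x > 0" using Pc c by (meson less_le_trans)
    ultimately have "K x y = 0" by simp
    thus ?thesis using \<open>push K P y = 0\<close> by simp
  qed
qed

lemma Ccap_intro: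
  fixes K :: "'x::finite \<Rightarrow> 'y::finite \<Rightarrow> real"
  assumes H: "\<And>P y. P \<in> Qset c \<Longrightarrow> push K P y > 0 \<Longrightarrow> (\<forall>x. K x y \<le> exp \<epsilon> * push K P y)"
    and K: "\<forall>x y. 0 \<le> K x y" and e: "0 \<le> \<epsilon>"
  shows "Ccap K (Qset c) \<le> ereal \<epsilon>"
  unfolding Ccap_def
proof (intro SUP_least)
  fix P y assume P: "P \<in> Qset c" and y: "y \<in> {y. push K P y > 0}"
  let ?M = "Max (range (\<lambda>x. K x y))"
  have pp: "push K P y > 0" using y by simp
  have "?M \<in> range (\<lambda>x. K x y)" by (rule Max_in) auto
  then obtain x where xM: "?M = K x y" by blast
  have Mle: "?M \<le> exp \<epsilon> * push K P y" using H[OF P pp] xM by simp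
  have "pml K P y \<le> \<epsilon>"
  proof (cases "?M > 0")
    case True
    have "ln (?M / push K P y) \<le> ln (exp \<epsilon>)"
      using True pp Mle by (subst ln_le_cancel_iff) (auto simp: divide_le_eq mult.commute)
    thus ?thesis unfolding pml_def by simp
  next
    case False
    hence "?M = 0" using xM K by (metis order.antisym not_less)
    thus ?thesis unfolding pml_def using e by simp
  qed
  thus "ereal (pml K P y) \<le> ereal \<epsilon>" by simp
qed


definition Ph :: "real \<Rightarrow> 'x::finite \<Rightarrow> 'x \<Rightarrow> real" where
  "Ph c x' z = c + (if z = x' then 1 - real CARD('x) * c else 0)"

lemma Ph_Q:
  assumes "0 < c" "c \<le> 1 / real CARD('x::finite)"
  shows "Ph c (x'::'x) \<in> Qset c"
proof -
  have N: "real CARD('x) * c \<le> 1" using assms by (simp add: field_simps)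
  have s: "(\<Sum>z\<in>UNIV. Ph c x' z) = 1"
    unfolding Ph_def by (simp add: sum.distrib)
  have ge: "c \<le> Ph c x' z" for z unfolding Ph_def using N by simp
  show ?thesis unfolding Qset_iff using s ge assms(1) by (meson less_le_trans less_imp_le)
qed

lemma push_Ph:
  "push K (Ph c x') y = c * (\<Sum>z\<in>UNIV. K z y) + (1 - real CARD('x::finite) * c) * K (x'::'x) y"
proof -
  let ?u = "1 - real CARD('x) * c"
  have "(\<lambda>z. K z y * Ph c x' z) = (\<lambda>z. c * K z y + (if z = x' then ?u * K x' y else 0))"
    by (auto simp: fun_eq_iff algebra_simps Ph_def)
  note fe = this
  hence "push K (Ph c x') y = (\<Sum>z\<in>UNIV. c * K z y + (if z = x' then ?u * K x' y else 0))"
    unfolding push_def by (simp only: fe)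
  also have "\<dots> = c * (\<Sum>z\<in>UNIV. K z y) + ?u * K x' y"
    by (simp add: sum.distrib sum_distrib_left)
  finally show ?thesis .
qed

lemma arith_pair:
  fixes a a' t c S N u :: real
  assumes 1: "a \<le> t*(c*S + u*a')" and 2: "1 - a' \<le> t*(c*(N-S) + u*(1-a))" and u: "u = 1 - N*c"
  shows "(a - a')*(1 + t*u) \<le> t - 1"
proof -
  have e: "t*(c*S + u*a') + t*(c*(N-S) + u*(1-a)) = t - t*u*(a - a')"
    unfolding u by (simp add: algebra_simps)
  have f: "(a - a')*(1 + t*u) = (a - a') + t*u*(a - a')" by (simp add: algebra_simps)
  show ?thesis using 1 2 e f by linarith
qed

lemma pair_bound:
  fixes K :: "'x::finite \<Rightarrow> bool \<Rightarrow> real"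
  assumes st: "stochastic K" and C: "Ccap K (Qset c) \<le> ereal \<epsilon>" and c: "0 < c" "c \<le> 1/real CARD('x)"
  shows "(K x True - K x' True) * (1 + exp \<epsilon> * (1 - real CARD('x) * c)) \<le> exp \<epsilon> - 1"
proof -
  let ?t = "exp \<epsilon>" and ?N = "real CARD('x)" and ?S = "\<Sum>z\<in>UNIV. K z True"
  have K0: "\<forall>x y. 0 \<le> K x y" using stoch_bool(2)[OF st] by blast
  have SF: "(\<Sum>z\<in>UNIV. K z False) = ?N - ?S"
    using stoch_bool(1)[OF st] by (simp add: sum_subtractf)
  have h1: "K x True \<le> ?t * (c * ?S + (1 - ?N * c) * K x' True)"
    using Ccap_point[OF C Ph_Q[OF c] c(1) K0, of x True x'] by (simp add: push_Ph)
  have h2: "K x' False \<le> ?t * (c * (?N - ?S) + (1 - ?N * c) * K x False)"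
    using Ccap_point[OF C Ph_Q[OF c] c(1) K0, of x' False x] by (simp add: push_Ph SF)
  have h3: "1 - K x' True \<le> ?t * (c * (?N - ?S) + (1 - ?N * c) * (1 - K x True))"
    using h2 stoch_bool(1)[OF st] by simp
  show ?thesis by (rule arith_pair[OF h1 h3]) simp
qed


lemma TV_bool:
  fixes K :: "'x::finite \<Rightarrow> bool \<Rightarrow> real"
  assumes st: "stochastic K"
  shows "TV (K x) (K x') = \<bar>K x True - K x' True\<bar>"
  unfolding TV_def sum_bool using stoch_bool(1)[OF st, of x] stoch_bool(1)[OF st, of x'] by simp

lemma two_elems: assumes "CARD('x) \<ge> 2" obtains x0 x1 :: "'x::finite" where "x0 \<noteq> x1"
proof -
  have "\<not> (\<forall>a b::'x. a = b)"
  proof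
    assume "\<forall>a b::'x. a = b"
    hence "UNIV = {undefined::'x}" by auto
    hence "CARD('x) = card {undefined::'x}" by (rule arg_cong)
    hence "CARD('x) = 1" by simp
    with assms show False by simp
  qed
  thus ?thesis using that by blast
qed

lemma eta_finite:
  fixes K :: "'x::finite \<Rightarrow> 'y::finite \<Rightarrow> real"
  shows "finite {TV (K x) (K x') | x x'. x \<noteq> x'}"
proof -
  have "{TV (K x) (K x') | x x'. x \<noteq> x'} \<subseteq> (\<lambda>(x,x'). TV (K x) (K x')) ` UNIV" by auto
  thus ?thesis by (rule finite_subset) simp
qed

lemma eta_bound:
  fixes K :: "'x::finite \<Rightarrow> bool \<Rightarrow> real"
  assumes N2: "CARD('x) \<ge> 2" and st: "stochastic K" and C: "Ccap K (Qset c) \<le> ereal \<epsilon>"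
    and c: "0 < c" "c \<le> 1/real CARD('x)"
  shows "eta_TV K \<le> (exp \<epsilon> - 1) / (exp \<epsilon> * (1 - real CARD('x) * c) + 1)"
proof -
  let ?t = "exp \<epsilon>" and ?N = "real CARD('x)"
  have u: "0 \<le> 1 - ?N * c" using c by (simp add: field_simps)
  have den: "0 < ?t * (1 - ?N * c) + 1" using u by (simp add: add_nonneg_pos)
  obtain x0 x1 :: 'x where "x0 \<noteq> x1" using two_elems[OF N2] by blast
  have ne: "{TV (K x) (K x') | x x'. x \<noteq> x'} \<noteq> {}" using \<open>x0 \<noteq> x1\<close> by blast
  have "\<forall>v\<in>{TV (K x) (K x') | x x'. x \<noteq> x'}. v \<le> (?t - 1) / (?t * (1 - ?N * c) + 1)"
  proof safe
    fix x x' :: 'x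
    have a: "(K x True - K x' True) * (1 + ?t * (1 - ?N * c)) \<le> ?t - 1"
      by (rule pair_bound[OF st C c])
    have b: "(K x' True - K x True) * (1 + ?t * (1 - ?N * c)) \<le> ?t - 1"
      by (rule pair_bound[OF st C c])
    have "\<bar>K x True - K x' True\<bar> * (?t * (1 - ?N * c) + 1) \<le> ?t - 1"
      using a b by (cases "K x True \<ge> K x' True") (auto simp: abs_if algebra_simps)
    thus "TV (K x) (K x') \<le> (?t - 1) / (?t * (1 - ?N * c) + 1)"
      unfolding TV_bool[OF st] using den by (simp add: le_divide_eq)
  qed
  thus ?thesis unfolding eta_TV_def using Max_le_iff[OF eta_finite ne] by blast
qed

lemma M0_empty:
  assumes "0 < c" "c \<le> 1 / real CARD('x::finite)" "\<epsilon> < ln (2 / (real CARD('x) * c))"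
  shows "(M0 \<epsilon> c :: ('x \<Rightarrow> bool \<Rightarrow> real) set) = {}"
proof (rule ccontr)
  let ?t = "exp \<epsilon>" and ?N = "real CARD('x)"
  assume "M0 \<epsilon> c \<noteq> ({} :: ('x \<Rightarrow> bool \<Rightarrow> real) set)"
  then obtain K :: "'x \<Rightarrow> bool \<Rightarrow> real" where K: "K \<in> M0 \<epsilon> c" by blast
  have st: "stochastic K" and C: "Ccap K (Qset c) \<le> ereal \<epsilon>" and T: "\<forall>y. \<exists>x. K x y = 0"
    using K unfolding M0_def Mset_def T0_def S2_def by auto
  obtain x0 where x0: "K x0 True = 0" using T by blast
  obtain x1 where x1: "K x1 False = 0" using T by blast
  have x1': "K x1 True = 1" using x1 stoch_bool(1)[OF st, of x1] by simp
  have "(K x1 True - K x0 True) * (1 + ?t * (1 - ?N * c)) \<le> ?t - 1"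
    by (rule pair_bound[OF st C assms(1,2)])
  hence "2 \<le> ?t * (?N * c)" using x0 x1' by (simp add: algebra_simps)
  moreover have "?N * c > 0" using assms(1) by simp
  moreover have "?t < 2 / (?N * c)"
  proof -
    have "?t < exp (ln (2 / (?N * c)))" using assms(3) by simp
    thus ?thesis using \<open>?N * c > 0\<close> by simp
  qed
  ultimately show False by (simp add: less_divide_eq)
qed

lemma witness:
  assumes N2: "CARD('x::finite) \<ge> 2" and c: "0 < c" "c \<le> 1 / real CARD('x)"
    and e: "0 \<le> \<epsilon>" "\<epsilon> < ln (2 / (real CARD('x) * c))"
  shows "\<exists>W :: 'x \<Rightarrow> bool \<Rightarrow> real. W \<in> M1 \<epsilon> c \<and>
     eta_TV W \<ge> (exp \<epsilon> - 1) / (exp \<epsilon> * (1 - real CARD('x) * c) + 1)"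
proof -
  let ?t = "exp \<epsilon>" and ?N = "real CARD('x)"
  define u where "u = 1 - ?N * c"
  define D where "D = (?t - 1) / (?t * u + 1)"
  have u0: "0 \<le> u" using c unfolding u_def by (simp add: field_simps)
  have den: "0 < ?t * u + 1" using u0 by (simp add: add_nonneg_pos)
  have t1: "1 \<le> ?t" using e by simp
  have hD: "D * (?t * u + 1) = ?t - 1" unfolding D_def using den by simp
  have D0: "0 \<le> D" unfolding D_def using den t1 by simp
  have Nc: "?N * c > 0" using c by simp
  have "?t < 2 / (?N * c)"
  proof -
    have "?t < exp (ln (2 / (?N * c)))" using e by simp
    thus ?thesis using Nc by simp
  qed
  hence tNc: "?t * (?N * c) < 2" using Nc by (simp add: less_divide_eq)
  have D1: "D < 1"
  proof -
    have "?t - 1 < ?t * u + 1" using tNc unfolding u_def by (simp add: algebra_simps)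
    thus ?thesis unfolding D_def using den by simp
  qed
  obtain x0 x1 :: 'x where ne: "x0 \<noteq> x1" using two_elems[OF N2] by blast
  define f where "f z = (if z = x1 then D/2 else 0) - (if z = x0 then D/2 else 0)" for z
  have fb: "\<bar>f z\<bar> \<le> D/2" for z unfolding f_def using ne D0 by auto
  have fs: "(\<Sum>z\<in>UNIV. f z) = 0" unfolding f_def by (simp add: sum_subtractf)
  define W :: "'x \<Rightarrow> bool \<Rightarrow> real" where "W x y = 1/2 + (if y then f x else - f x)" for x y
  have Wlo: "(1 - D)/2 \<le> W x y" for x y using fb[of x] unfolding W_def by (auto simp: abs_le_iff)
  have Whi: "W x y \<le> (1 + D)/2" for x y using fb[of x] unfolding W_def by (auto simp: abs_le_iff)
  have hp: "0 < (1 - D)/2" using D1 by simp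
  have Wpos: "0 < W x y" for x y using Wlo[of x y] hp by linarith
  hence W0: "\<forall>x y. 0 \<le> W x y" by (simp add: less_imp_le)
  have st: "stochastic W" unfolding stochastic_def using W0 by (simp add: sum_bool W_def)
  have Wsum: "(\<Sum>z\<in>UNIV. W z y) = ?N / 2" for y
    by (cases y) (simp_all add: W_def sum.distrib fs sum_negf sum_subtractf)
  have key: "?t * ((1 - D)/2 * u + c * (?N/2)) = (1 + D)/2"
  proof -
    have "?t * ((1 - D) * u + c * ?N) = ?t - ?t * u * D" unfolding u_def by (simp add: algebra_simps)
    also have "\<dots> = 1 + D" using hD by (simp add: algebra_simps)
    finally show ?thesis by (simp add: field_simps)
  qed
  have C: "Ccap W (Qset c) \<le> ereal \<epsilon>"
  proof (rule Ccap_intro[OF _ W0 e(1)])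
    fix P :: "'x \<Rightarrow> real" and y assume P: "P \<in> Qset c"
    have Pc: "\<forall>z. c \<le> P z" and P1: "(\<Sum>z\<in>UNIV. P z) = 1" using P by (auto simp: Qset_iff)
    have "push W P y = (\<Sum>z\<in>UNIV. W z y * (P z - c)) + c * (\<Sum>z\<in>UNIV. W z y)"
      unfolding push_def by (simp add: sum_distrib_left algebra_simps sum.distrib[symmetric])
    also have "(\<Sum>z\<in>UNIV. W z y * (P z - c)) \<ge> (\<Sum>z\<in>UNIV. (1 - D)/2 * (P z - c))"
      by (rule sum_mono, rule mult_right_mono) (use Wlo Pc in auto)
    moreover have "(\<Sum>z\<in>UNIV. (1 - D)/2 * (P z - c)) = (1 - D)/2 * u"
    proof -
      have "(\<Sum>z\<in>UNIV. P z - c) = u" unfolding u_def by (simp add: sum_subtractf P1)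
      thus ?thesis by (simp only: sum_distrib_left[symmetric])
    qed
    ultimately have pl: "push W P y \<ge> (1 - D)/2 * u + c * (?N/2)"
      using Wsum[of y] by (simp add: push_def)
    have m: "?t * ((1 - D)/2 * u + c * (?N/2)) \<le> ?t * push W P y"
      by (rule mult_left_mono[OF pl]) simp
    have hh: "(1 + D)/2 \<le> ?t * push W P y" using m key by linarith
    show "\<forall>x. W x y \<le> ?t * push W P y"
    proof
      fix x show "W x y \<le> ?t * push W P y" using Whi[of x y] hh by linarith
    qed
  qed
  have T: "W \<in> T1" unfolding T1_def S2_def using st Wpos by simp
  have "W \<in> M1 \<epsilon> c" unfolding M1_def Mset_def using st C T by simp
  moreover have "eta_TV W \<ge> D"
  proof -
    have "TV (W x1) (W x0) = D" unfolding TV_bool[OF st] W_def f_def using ne D0 by simp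
    moreover have "TV (W x1) (W x0) \<in> {TV (W x) (W x') | x x'. x \<noteq> x'}" using ne by blast
    hence "TV (W x1) (W x0) \<le> Max {TV (W x) (W x') | x x'. x \<noteq> x'}" by (rule Max_ge[OF eta_finite])
    ultimately show ?thesis unfolding eta_TV_def by simp
  qed
  ultimately show ?thesis unfolding D_def u_def by (auto simp: mult.commute)
qed

theorem theorem3:
  fixes c \<epsilon> :: real
  assumes "CARD('x::finite) \<ge> 2"
    and "0 < c" and "c \<le> 1 / real CARD('x)"
    and "0 \<le> \<epsilon>" and "\<epsilon> < ln (2 / (real CARD('x) * c))"
  shows "(SUP K\<in>(M1 \<epsilon> c :: ('x \<Rightarrow> bool \<Rightarrow> real) set). eta_TV K)
           = (exp \<epsilon> - 1) / (exp \<epsilon> * (1 - real CARD('x) * c) + 1)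
         \<and> ((M2 \<epsilon> c :: ('x \<Rightarrow> bool \<Rightarrow> real) set) \<noteq> {} \<longrightarrow>
           (SUP K\<in>(M2 \<epsilon> c :: ('x \<Rightarrow> bool \<Rightarrow> real) set). eta_TV K)
             \<le> (SUP K\<in>(M1 \<epsilon> c :: ('x \<Rightarrow> bool \<Rightarrow> real) set). eta_TV K))
         \<and> (M0 \<epsilon> c :: ('x \<Rightarrow> bool \<Rightarrow> real) set) = {}"
proof -
  define D where "D = (exp \<epsilon> - 1) / (exp \<epsilon> * (1 - real CARD('x) * c) + 1)"
  have ub: "eta_TV K \<le> D" if "K \<in> Mset \<epsilon> c" for K :: "'x \<Rightarrow> bool \<Rightarrow> real"
    unfolding D_def
    using that eta_bound[OF assms(1) _ _ assms(2,3)] unfolding Mset_def by blast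
  obtain W :: "'x \<Rightarrow> bool \<Rightarrow> real" where W: "W \<in> M1 \<epsilon> c" "eta_TV W \<ge> D"
    using witness[OF assms(1-5)] unfolding D_def by blast
  have WD: "eta_TV W = D" using W ub[of W] unfolding M1_def by auto
  have s1: "(SUP K\<in>(M1 \<epsilon> c :: ('x \<Rightarrow> bool \<Rightarrow> real) set). eta_TV K) = D"
  proof (rule cSup_eq_maximum)
    show "D \<in> eta_TV ` (M1 \<epsilon> c :: ('x \<Rightarrow> bool \<Rightarrow> real) set)" using W(1) WD by (metis image_eqI)
    show "x \<le> D" if "x \<in> eta_TV ` (M1 \<epsilon> c :: ('x \<Rightarrow> bool \<Rightarrow> real) set)" for x
      using that ub unfolding M1_def by auto
  qed
  have s2: "(SUP K\<in>(M2 \<epsilon> c :: ('x \<Rightarrow> bool \<Rightarrow> real) set). eta_TV K) \<le> D"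
    if "(M2 \<epsilon> c :: ('x \<Rightarrow> bool \<Rightarrow> real) set) \<noteq> {}"
    by (rule cSUP_least[OF that]) (use ub in \<open>auto simp: M2_def\<close>)
  show ?thesis using s1 s2 M0_empty[OF assms(2,3,5)] unfolding D_def by simp
qed

end
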